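(* Let $\mathcal{B}$ be an algebra in a functional language $\mathcal{L}$ and let $\Lambda^{\mathcal{B}}$ be the direct system of formulas associated with $\mathcal{B}$ (described in the context). Then $L(\Lambda^{\mathcal{B}})\cong\mathcal{B}$.
   Context: Functional language: operation symbols $F$ (arity $n_F$) and constants only. A diagram-formula in a finite reduct $\mathcal{L}'$ in finite variables $X$ is a conjunction of atomic formulas and negations such that $\neg(x=y)$ is a conjunct for distinct $x,y\in X$, for each $F\in\mathcal{L}'$ and $(x_0,\dots,x_{n_F})\in X^{n_F+1}$ exactly one of $F(x_1,\dots,x_{n_F})=x_0$ and its negation is a conjunct, and for each constant $c\in\mathcal{L}'$ and $x\in X$ exactly one of $x=c$, $\neg(x=c)$ is a conjunct. A direct system of formulas $\Lambda=(I,\varphi_i,\gamma_{ij})$: $(I,\le)$ directed; $\varphi_i$ consistent diagram-formulas in finite reducts $\mathcal{L}_i$ and finite variables $X_i$; maps $\gamma_{ij}:X_i\to X_j$ ($i\le j$) with $\gamma_{ii}=\mathrm{id}$, $\gamma_{jk}\gamma_{ij}=\gamma_{ik}$, conjuncts of $\varphi_i(\gamma_{ij}(X_i))$ are conjuncts of $\varphi_j$; every constant appears in a conjunct $x=c$ of some $\varphi_i$; for all $F,i,(x_1,\dots,x_{n_F})\in X_i^{n_F}$ some $j\ge i$ has a conjunct $F(\gamma_{ij}(x_1),\dots)=x_j$. Its limit algebra $L(\Lambda)$ has universe $\{(x,i):x\in X_i\}/\!\equiv$, $(x,i)\equiv(y,j)$ iff $\gamma_{ik}(x)=\gamma_{jk}(y)$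 for some $k\ge i,j$, with constants/operations read off from the conjuncts $x=c$ and $F(\dots)=x_j$. The system $\Lambda^{\mathcal{B}}$: take variables $X=\{x_b:b\in B\}$; $I$ is the set of pairs $(\mathcal{L}',X')$ with $\mathcal{L}'$ a finite reduct of $\mathcal{L}$ and $X'$ a finite subset of $X$, ordered by $(\mathcal{L}',X')\le(\mathcal{L}'',X'')$ iff $\mathcal{L}'\subseteq\mathcal{L}''$ and $X'\subseteq X''$; $\varphi_{(\mathcal{L}',X')}$ is the diagram-formula in $\mathcal{L}'$ and $X'$ consisting of exactly those conjuncts (among $x_b\ne x_{b'}$, $x_b=c$ or its negation, $F(x_{b_1},\dots,x_{b_{n_F}})=x_{b_0}$ or its negation, for $c,F\in\mathcal{L}'$ and variables in $X'$) that are true in $\mathcal{B}$ under $x_b\mapsto b$; all maps $\gamma$ are inclusions $x_b\mapsto x_b$. This is a direct system of formulas. *)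

theory Defs
  imports Main
begin

definition is_algebra ::
  "('f \<Rightarrow> nat) \<Rightarrow> 'a set \<Rightarrow> ('f \<Rightarrow> 'a list \<Rightarrow> 'a) \<Rightarrow> ('c \<Rightarrow> 'a) \<Rightarrow> bool" where
  "is_algebra ar A opA cA \<longleftrightarrow> A \<noteq> {} \<and>
     (\<forall>F xs. length xs = ar F \<and> set xs \<subseteq> A \<longrightarrow> opA F xs \<in> A) \<and>
     (\<forall>c. cA c \<in> A)"

definition alg_iso ::
  "('f \<Rightarrow> nat) \<Rightarrow> 'a set \<Rightarrow> ('f \<Rightarrow> 'a list \<Rightarrow> 'a) \<Rightarrow> ('c \<Rightarrow> 'a)
   \<Rightarrow> 'b set \<Rightarrow> ('f \<Rightarrow> 'b list \<Rightarrow> 'b) \<Rightarrow> ('c \<Rightarrow> 'b) \<Rightarrow> ('a \<Rightarrow> 'b) \<Rightarrow> bool" where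
  "alg_iso ar A opA cA B opB cB h \<longleftrightarrow> bij_betw h A B \<and>
     (\<forall>F xs. length xs = ar F \<and> set xs \<subseteq> A \<longrightarrow> h (opA F xs) = opB F (map h xs)) \<and>
     (\<forall>c. h (cA c) = cB c)"

definition isomorphic ::
  "('f \<Rightarrow> nat) \<Rightarrow> 'a set \<Rightarrow> ('f \<Rightarrow> 'a list \<Rightarrow> 'a) \<Rightarrow> ('c \<Rightarrow> 'a)
   \<Rightarrow> 'b set \<Rightarrow> ('f \<Rightarrow> 'b list \<Rightarrow> 'b) \<Rightarrow> ('c \<Rightarrow> 'b) \<Rightarrow> bool" where
  "isomorphic ar A opA cA B opB cB \<longleftrightarrow> (\<exists>h. alg_iso ar A opA cA B opB cB h)"

text \<open>Atomic formulas in variables 'v: x = y, x = c, F(x1,...,xn) = x0.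
  A literal is an atomic formula (True) or its negation (False).
  A formula (conjunction) is represented by its set of conjuncts.\<close>

datatype ('f, 'c, 'v) atom = AEqV 'v 'v | AEqC 'v 'c | AOp 'f "'v list" 'v

type_synonym ('f, 'c, 'v) lit = "bool \<times> ('f, 'c, 'v) atom"

fun sat_atom :: "('f \<Rightarrow> 'a list \<Rightarrow> 'a) \<Rightarrow> ('c \<Rightarrow> 'a) \<Rightarrow> ('v \<Rightarrow> 'a) \<Rightarrow> ('f, 'c, 'v) atom \<Rightarrow> bool" where
  "sat_atom opA cA \<sigma> (AEqV x y) = (\<sigma> x = \<sigma> y)"
| "sat_atom opA cA \<sigma> (AEqC x c) = (\<sigma> x = cA c)"
| "sat_atom opA cA \<sigma> (AOp F xs x0) = (opA F (map \<sigma> xs) = \<sigma> x0)"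

definition sat_lit :: "('f \<Rightarrow> 'a list \<Rightarrow> 'a) \<Rightarrow> ('c \<Rightarrow> 'a) \<Rightarrow> ('v \<Rightarrow> 'a) \<Rightarrow> ('f, 'c, 'v) lit \<Rightarrow> bool" where
  "sat_lit opA cA \<sigma> l \<longleftrightarrow> (fst l \<longleftrightarrow> sat_atom opA cA \<sigma> (snd l))"

definition diagram_lits :: "('f \<Rightarrow> nat) \<Rightarrow> 'f set \<Rightarrow> 'c set \<Rightarrow> 'v set \<Rightarrow> ('f, 'c, 'v) lit set" where
  "diagram_lits ar Fs Cs X =
     {(False, AEqV x y) | x y. x \<in> X \<and> y \<in> X \<and> x \<noteq> y}
   \<union> {(b, AEqC x c) | b x c. x \<in> X \<and> c \<in> Cs}
   \<union> {(b, AOp F xs x0) | b F xs x0. F \<in> Fs \<and> length xs = ar F \<and> set xs \<subseteq> X \<and> x0 \<in> X}"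

record ('i, 'v, 'f, 'c) dsys =
  idx  :: "'i set"
  leq  :: "'i \<Rightarrow> 'i \<Rightarrow> bool"
  lang :: "'i \<Rightarrow> 'f set \<times> 'c set"
  vars :: "'i \<Rightarrow> 'v set"
  form :: "'i \<Rightarrow> ('f, 'c, 'v) lit set"
  gam  :: "'i \<Rightarrow> 'i \<Rightarrow> 'v \<Rightarrow> 'v"

definition lim_elems :: "('i, 'v, 'f, 'c) dsys \<Rightarrow> ('v \<times> 'i) set" where
  "lim_elems \<Lambda> = {(x, i). i \<in> idx \<Lambda> \<and> x \<in> vars \<Lambda> i}"

definition lim_rel :: "('i, 'v, 'f, 'c) dsys \<Rightarrow> (('v \<times> 'i) \<times> ('v \<times> 'i)) set" where
  "lim_rel \<Lambda> = {((x, i), (y, j)). (x, i) \<in> lim_elems \<Lambda> \<and> (y, j) \<in> lim_elems \<Lambda> \<and>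
      (\<exists>k \<in> idx \<Lambda>. leq \<Lambda> i k \<and> leq \<Lambda> j k \<and> gam \<Lambda> i k x = gam \<Lambda> j k y)}"

definition lim_carrier :: "('i, 'v, 'f, 'c) dsys \<Rightarrow> ('v \<times> 'i) set set" where
  "lim_carrier \<Lambda> = lim_elems \<Lambda> // lim_rel \<Lambda>"

definition lim_const :: "('i, 'v, 'f, 'c) dsys \<Rightarrow> 'c \<Rightarrow> ('v \<times> 'i) set" where
  "lim_const \<Lambda> c = (SOME C. \<exists>i \<in> idx \<Lambda>. \<exists>x \<in> vars \<Lambda> i.
      (True, AEqC x c) \<in> form \<Lambda> i \<and> C = lim_rel \<Lambda> `` {(x, i)})"

definition lim_op :: "('i, 'v, 'f, 'c) dsys \<Rightarrow> 'f \<Rightarrow> ('v \<times> 'i) set list \<Rightarrow> ('v \<times> 'i) set" where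
  "lim_op \<Lambda> F cls = (SOME C. \<exists>j \<in> idx \<Lambda>. \<exists>x0 \<in> vars \<Lambda> j. \<exists>ys.
      length ys = length cls \<and>
      (\<forall>m < length cls. \<exists>x i. (x, i) \<in> cls ! m \<and> leq \<Lambda> i j \<and> ys ! m = gam \<Lambda> i j x) \<and>
      (True, AOp F ys x0) \<in> form \<Lambda> j \<and> C = lim_rel \<Lambda> `` {(x0, j)})"

text \<open>The system \<Lambda>^B. Variables x_b are identified with the elements b \<in> B.
  Indices are ((Fs, Cs), X') with Fs, Cs finite reducts and X' \<subseteq> B finite.\<close>

definition sysB :: "('f \<Rightarrow> nat) \<Rightarrow> 'b set \<Rightarrow> ('f \<Rightarrow> 'b list \<Rightarrow> 'b) \<Rightarrow> ('c \<Rightarrow> 'b)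
    \<Rightarrow> (('f set \<times> 'c set) \<times> 'b set, 'b, 'f, 'c) dsys" where
  "sysB ar B opB cB =
    \<lparr> idx = {((Fs, Cs), X). finite Fs \<and> finite Cs \<and> finite X \<and> X \<subseteq> B},
      leq = (\<lambda>((Fs, Cs), X) ((Fs', Cs'), X'). Fs \<subseteq> Fs' \<and> Cs \<subseteq> Cs' \<and> X \<subseteq> X'),
      lang = fst,
      vars = snd,
      form = (\<lambda>((Fs, Cs), X). {l \<in> diagram_lits ar Fs Cs X. sat_lit opB cB id l}),
      gam = (\<lambda>i j x. x) \<rparr>"

end

theory Submission
  imports Defs
begin

lemma sysB_simps:
  "idx (sysB ar B opB cB) = {((Fs, Cs), X). finite Fs \<and> finite Cs \<and> finite X \<and> X \<subseteq> B}"
  "leq (sysB ar B opB cB) i j = (fst (fst i) \<subseteq> fst (fst j) \<and> snd (fst i) \<subseteq> snd (fst j) \<and> snd i \<subseteq> snd j)"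
  "vars (sysB ar B opB cB) = snd"
  "form (sysB ar B opB cB) i = {l \<in> diagram_lits ar (fst (fst i)) (snd (fst i)) (snd i). sat_lit opB cB id l}"
  "gam (sysB ar B opB cB) i j x = x"
  by (auto simp: sysB_def split: prod.splits)

definition KK :: "('f \<Rightarrow> nat) \<Rightarrow> 'b set \<Rightarrow> ('f \<Rightarrow> 'b list \<Rightarrow> 'b) \<Rightarrow> ('c \<Rightarrow> 'b) \<Rightarrow> 'b
   \<Rightarrow> ('b \<times> ('f set \<times> 'c set) \<times> 'b set) set" where
  "KK ar B opB cB b = {(b, j) | j. j \<in> idx (sysB ar B opB cB) \<and> b \<in> snd j}"

lemma rel_class:
  assumes "(x, i) \<in> lim_elems (sysB ar B opB cB)"
  shows "lim_rel (sysB ar B opB cB) `` {(x, i)} = KK ar B opB cB x"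
proof -
  have "((x,i),(y,j)) \<in> lim_rel (sysB ar B opB cB) \<longleftrightarrow> (y,j) \<in> KK ar B opB cB x" for y j
  proof
    assume "((x,i),(y,j)) \<in> lim_rel (sysB ar B opB cB)"
    thus "(y,j) \<in> KK ar B opB cB x"
      unfolding lim_rel_def lim_elems_def KK_def by (auto simp: sysB_simps)
  next
    assume a: "(y,j) \<in> KK ar B opB cB x"
    obtain Fs Cs X where i: "i = ((Fs,Cs),X)" by (metis prod.collapse)
    obtain Fs' Cs' X' where j: "j = ((Fs',Cs'),X')" by (metis prod.collapse)
    define k where "k = ((Fs \<union> Fs', Cs \<union> Cs'), X \<union> X')"
    have k: "k \<in> idx (sysB ar B opB cB)"
      using a assms unfolding KK_def lim_elems_def k_def by (auto simp: sysB_simps i j)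
    have l: "leq (sysB ar B opB cB) i k" "leq (sysB ar B opB cB) j k"
      by (auto simp: sysB_simps i j k_def)
    have e: "(x,i) \<in> lim_elems (sysB ar B opB cB)" "(y,j) \<in> lim_elems (sysB ar B opB cB)" "x = y"
      using a assms unfolding KK_def lim_elems_def by (auto simp: sysB_simps)
    show "((x,i),(y,j)) \<in> lim_rel (sysB ar B opB cB)"
    proof -
      have "\<exists>k\<in>idx (sysB ar B opB cB). leq (sysB ar B opB cB) i k \<and> leq (sysB ar B opB cB) j k \<and>
             gam (sysB ar B opB cB) i k x = gam (sysB ar B opB cB) j k y"
        using k l e(3) by (auto simp only: sysB_simps(5))
      thus ?thesis unfolding lim_rel_def using e(1,2) by simp
    qed
  qed
  thus ?thesis by auto
qed

lemma KK_ne: "b \<in> B \<Longrightarrow> (b, (({},{}),{b})) \<in> KK ar B opB cB b"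
  by (auto simp: KK_def sysB_simps)

lemma elem_single: "b \<in> B \<Longrightarrow> (b, (({},{}),{b})) \<in> lim_elems (sysB ar B opB cB)"
  by (auto simp: lim_elems_def sysB_simps)

lemma carrier_eq: "lim_carrier (sysB ar B opB cB) = KK ar B opB cB ` B"
proof -
  have "lim_carrier (sysB ar B opB cB) = (\<Union>p\<in>lim_elems (sysB ar B opB cB). {lim_rel (sysB ar B opB cB) `` {p}})"
    unfolding lim_carrier_def quotient_def by simp
  also have "\<dots> = (\<Union>p\<in>lim_elems (sysB ar B opB cB). {KK ar B opB cB (fst p)})"
  proof (rule SUP_cong[OF refl])
    fix p assume p: "p \<in> lim_elems (sysB ar B opB cB)"
    obtain x i where "p = (x, i)" by (metis prod.collapse)
    thus "{lim_rel (sysB ar B opB cB) `` {p}} = {KK ar B opB cB (fst p)}"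
      using p rel_class by simp
  qed
  also have "\<dots> = KK ar B opB cB ` B"
  proof -
    have "fst ` lim_elems (sysB ar B opB cB) = B"
    proof
      show "fst ` lim_elems (sysB ar B opB cB) \<subseteq> B"
        by (auto simp: lim_elems_def sysB_simps)
      show "B \<subseteq> fst ` lim_elems (sysB ar B opB cB)"
        using elem_single by (metis fst_conv image_eqI subsetI)
    qed
    moreover have "(\<Union>p\<in>lim_elems (sysB ar B opB cB). {KK ar B opB cB (fst p)})
       = KK ar B opB cB ` (fst ` lim_elems (sysB ar B opB cB))" by auto
    ultimately show ?thesis by simp
  qed
  finally show ?thesis .
qed

definition hh :: "('b \<times> 'i) set \<Rightarrow> 'b" where "hh C = fst (SOME p. p \<in> C)"

lemma hh_KK: "b \<in> B \<Longrightarrow> hh (KK ar B opB cB b) = b"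
proof -
  assume b: "b \<in> B"
  have "(SOME p. p \<in> KK ar B opB cB b) \<in> KK ar B opB cB b"
    using KK_ne[OF b] by (rule someI)
  thus ?thesis unfolding hh_def KK_def by auto
qed

theorem mainTheorem12:
  fixes ar :: "'f \<Rightarrow> nat" and B :: "'b set"
    and opB :: "'f \<Rightarrow> 'b list \<Rightarrow> 'b" and cB :: "'c \<Rightarrow> 'b"
  assumes "is_algebra ar B opB cB"
  shows "isomorphic ar (lim_carrier (sysB ar B opB cB)) (lim_op (sysB ar B opB cB))
           (lim_const (sysB ar B opB cB)) B opB cB"
proof -
  let ?S = "sysB ar B opB cB"
  let ?K = "KK ar B opB cB"
  have cB: "cB c \<in> B" for c using assms unfolding is_algebra_def by auto
  have opB: "length xs = ar F \<Longrightarrow> set xs \<subseteq> B \<Longrightarrow> opB F xs \<in> B" for F xs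
    using assms unfolding is_algebra_def by auto
  have bij: "bij_betw hh (lim_carrier ?S) B"
    unfolding carrier_eq
    by (rule bij_betw_byWitness[where f'="?K"]) (auto simp: hh_KK)
  have const: "hh (lim_const ?S c) = cB c" for c
  proof -
    have "lim_const ?S c = ?K (cB c)"
      unfolding lim_const_def
    proof (rule someI2)
      show "\<exists>i\<in>idx ?S. \<exists>x\<in>vars ?S i. (True, AEqC x c) \<in> form ?S i \<and> ?K (cB c) = lim_rel ?S `` {(x, i)}"
      proof (intro bexI conjI)
        show "(({},{c}),{cB c}) \<in> idx ?S" using cB by (auto simp: sysB_simps)
        show "cB c \<in> vars ?S (({},{c}),{cB c})" by (simp add: sysB_simps)
        show "(True, AEqC (cB c) c) \<in> form ?S (({},{c}),{cB c})"
          by (auto simp: sysB_simps diagram_lits_def sat_lit_def)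
        show "?K (cB c) = lim_rel ?S `` {(cB c, (({},{c}),{cB c}))}"
          using cB by (intro rel_class[symmetric]) (auto simp: lim_elems_def sysB_simps)
      qed
    next
      fix C assume "\<exists>i\<in>idx ?S. \<exists>x\<in>vars ?S i. (True, AEqC x c) \<in> form ?S i \<and> C = lim_rel ?S `` {(x, i)}"
      then obtain i x where i: "i \<in> idx ?S" "x \<in> vars ?S i" "(True, AEqC x c) \<in> form ?S i"
        "C = lim_rel ?S `` {(x, i)}" by blast
      have "x = cB c" using i(3) by (auto simp: sysB_simps diagram_lits_def sat_lit_def)
      moreover have "(x,i) \<in> lim_elems ?S" using i by (auto simp: lim_elems_def)
      ultimately show "C = ?K (cB c)" using i(4) rel_class by metis
    qed
    thus ?thesis using hh_KK cB by metis
  qed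
  have ops: "hh (lim_op ?S F xs) = opB F (map hh xs)"
    if len: "length xs = ar F" and xs: "set xs \<subseteq> lim_carrier ?S" for F xs
  proof -
    define bs where "bs = map hh xs"
    have bsB: "set bs \<subseteq> B" using xs bij bs_def bij_betw_imp_surj_on by fastforce
    have xsK: "xs ! m = ?K (bs ! m)" if "m < length xs" for m
    proof -
      have "xs ! m \<in> ?K ` B" using xs that carrier_eq nth_mem by blast
      then obtain b where "b \<in> B" "xs ! m = ?K b" by blast
      thus ?thesis using that by (simp add: bs_def hh_KK)
    qed
    have lbs: "length bs = length xs" by (simp add: bs_def)
    have "lim_op ?S F xs = ?K (opB F bs)"
      unfolding lim_op_def
    proof (rule someI2)
      let ?j = "(({F},{}), set bs \<union> {opB F bs})"
      have ob: "opB F bs \<in> B" using opB bsB len lbs by simp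
      have jI: "?j \<in> idx ?S" using bsB ob by (auto simp: sysB_simps)
      show "\<exists>j\<in>idx ?S. \<exists>x0\<in>vars ?S j. \<exists>ys. length ys = length xs \<and>
        (\<forall>m<length xs. \<exists>x i. (x, i) \<in> xs ! m \<and> leq ?S i j \<and> ys ! m = gam ?S i j x) \<and>
        (True, AOp F ys x0) \<in> form ?S j \<and> ?K (opB F bs) = lim_rel ?S `` {(x0, j)}"
      proof (intro bexI)
        show "?j \<in> idx ?S" by (rule jI)
        show "opB F bs \<in> vars ?S ?j" by (simp add: sysB_simps)
        show "\<exists>ys. length ys = length xs \<and>
        (\<forall>m<length xs. \<exists>x i. (x, i) \<in> xs ! m \<and> leq ?S i ?j \<and> ys ! m = gam ?S i ?j x) \<and>
        (True, AOp F ys (opB F bs)) \<in> form ?S ?j \<and> ?K (opB F bs) = lim_rel ?S `` {(opB F bs, ?j)}"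
        proof (rule exI[of _ bs], intro conjI allI impI)
        show "length bs = length xs" by (rule lbs)
        show "(True, AOp F bs (opB F bs)) \<in> form ?S ?j"
          using len lbs by (auto simp: sysB_simps diagram_lits_def sat_lit_def)
        show "?K (opB F bs) = lim_rel ?S `` {(opB F bs, ?j)}"
          using jI by (intro rel_class[symmetric]) (auto simp: lim_elems_def sysB_simps)
      next
        fix m assume m: "m < length xs"
        have bm: "bs ! m \<in> B" using bsB m lbs nth_mem by fastforce
        show "\<exists>x i. (x, i) \<in> xs ! m \<and> leq ?S i ?j \<and> bs ! m = gam ?S i ?j x"
          apply (rule exI[of _ "bs ! m"], rule exI[of _ "(({},{}),{bs ! m})"])
          using xsK[OF m] KK_ne[OF bm, of ar opB cB] m lbs by (auto simp: sysB_simps)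
      qed
      qed
    next
      fix C assume "\<exists>j\<in>idx ?S. \<exists>x0\<in>vars ?S j. \<exists>ys. length ys = length xs \<and>
        (\<forall>m<length xs. \<exists>x i. (x, i) \<in> xs ! m \<and> leq ?S i j \<and> ys ! m = gam ?S i j x) \<and>
        (True, AOp F ys x0) \<in> form ?S j \<and> C = lim_rel ?S `` {(x0, j)}"
      then obtain j x0 ys where j: "j \<in> idx ?S" "x0 \<in> vars ?S j" "length ys = length xs"
        "\<forall>m<length xs. \<exists>x i. (x, i) \<in> xs ! m \<and> leq ?S i j \<and> ys ! m = gam ?S i j x"
        "(True, AOp F ys x0) \<in> form ?S j" "C = lim_rel ?S `` {(x0, j)}" by blast
      have "ys ! m = bs ! m" if m: "m < length xs" for m
      proof -
        obtain x i where "(x, i) \<in> xs ! m" "ys ! m = x" using j(4) m by (auto simp: sysB_simps)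
        thus ?thesis using xsK[OF m] by (auto simp: KK_def)
      qed
      hence "ys = bs" using j(3) lbs by (simp add: nth_equalityI)
      hence "x0 = opB F bs" using j(5) by (auto simp: sysB_simps diagram_lits_def sat_lit_def)
      moreover have "(x0, j) \<in> lim_elems ?S" using j by (auto simp: lim_elems_def)
      ultimately show "C = ?K (opB F bs)" using j(6) rel_class by metis
    qed
    moreover have "opB F bs \<in> B" using opB bsB len lbs by simp
    ultimately show ?thesis using hh_KK bs_def by metis
  qed
  show ?thesis unfolding isomorphic_def alg_iso_def
    using bij const ops by blast
qed

end
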